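(* Let $k\ge 0$ be an integer and let $G=(V,E)$ be a finite graph which is the union of a finite nonempty family $Q$ of v-cliques (i.e. $V=\bigcup_{C\in Q}C$ and $E$ is the set of pairs of distinct nodes lying in a common member of $Q$). Suppose that for every pair of v-cliques $C,C'\in Q$ there is a sequence $C=C_0,C_1,\dots,C_t=C'$ of members of $Q$ such that $|C_{i-1}\cap C_i|\ge k+1$ for all $i=1,\dots,t$. Then $G$ is $k$-robust.
   Context: A v-clique is a set of nodes inducing a complete subgraph. A finite simple undirected graph $H$ is $k$-robust if, after removing arbitrary $k$ nodes of $H$ and the edges incident to them, the remaining graph is still connected; a clique or a single node is $k$-robust for every $k$. *)

theory Defs
  imports Main
begin

(* A finite simple graph is given by a vertex set V and a symmetric irreflexive
   adjacency predicate E; only edges between vertices of V matter. *)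

definition is_vclique :: "'a set \<Rightarrow> ('a \<Rightarrow> 'a \<Rightarrow> bool) \<Rightarrow> bool" where
  "is_vclique V E \<longleftrightarrow> (\<forall>x\<in>V. \<forall>y\<in>V. x \<noteq> y \<longrightarrow> E x y)"

(* connectivity of the subgraph induced on V (the empty graph counts as connected) *)
definition connected_graph :: "'a set \<Rightarrow> ('a \<Rightarrow> 'a \<Rightarrow> bool) \<Rightarrow> bool" where
  "connected_graph V E \<longleftrightarrow>
     (\<forall>x\<in>V. \<forall>y\<in>V. (\<lambda>a b. a \<in> V \<and> b \<in> V \<and> E a b)\<^sup>*\<^sup>* x y)"

definition k_robust :: "nat \<Rightarrow> 'a set \<Rightarrow> ('a \<Rightarrow> 'a \<Rightarrow> bool) \<Rightarrow> bool" where
  "k_robust k V E \<longleftrightarrow> is_vclique V E \<or>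
     (\<forall>S. S \<subseteq> V \<longrightarrow> card S \<le> k \<longrightarrow> connected_graph (V - S) E)"

definition union_vertices :: "'a set set \<Rightarrow> 'a set" where
  "union_vertices Q = \<Union>Q"

definition union_edges :: "'a set set \<Rightarrow> 'a \<Rightarrow> 'a \<Rightarrow> bool" where
  "union_edges Q x y \<longleftrightarrow> x \<noteq> y \<and> (\<exists>C\<in>Q. x \<in> C \<and> y \<in> C)"

end

theory Submission
  imports Defs
begin

lemma same_clique:
  assumes "C \<in> Q" "a \<in> C - S" "b \<in> C - S"
  shows "(\<lambda>a b. a \<in> \<Union>Q - S \<and> b \<in> \<Union>Q - S \<and> union_edges Q a b)\<^sup>*\<^sup>* a b"
proof (cases "a = b")
  case True then show ?thesis by simp
next
  case False
  then show ?thesis using assms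
    by (intro r_into_rtranclp) (auto simp: union_edges_def)
qed

lemma path_lemma:
  assumes fin: "finite (\<Union>Q)" and S: "S \<subseteq> \<Union>Q" and cS: "card S \<le> k"
  shows "cs \<noteq> [] \<Longrightarrow> set cs \<subseteq> Q \<Longrightarrow>
    (\<forall>i. Suc i < length cs \<longrightarrow> k + 1 \<le> card (cs ! i \<inter> cs ! Suc i)) \<Longrightarrow>
    x \<in> hd cs - S \<Longrightarrow> y \<in> last cs - S \<Longrightarrow>
    (\<lambda>a b. a \<in> \<Union>Q - S \<and> b \<in> \<Union>Q - S \<and> union_edges Q a b)\<^sup>*\<^sup>* x y"
proof (induction cs arbitrary: x)
  case Nil then show ?case by simp
next
  case (Cons c cs)
  show ?case
  proof (cases "cs = []")
    case True
    then show ?thesis using Cons.prems same_clique[of c Q x S y] by simp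
  next
    case False
    have cQ: "c \<in> Q" "hd cs \<in> Q" using Cons.prems False by auto
    have "k + 1 \<le> card (c \<inter> hd cs)"
      using Cons.prems(3)[rule_format, of 0] False by (simp add: hd_conv_nth)
    moreover have "finite (c \<inter> hd cs)" using fin cQ
      by (meson Int_lower1 Union_upper finite_subset)
    ultimately have "\<not> (c \<inter> hd cs \<subseteq> S)"
    proof (intro notI)
      assume "k + 1 \<le> card (c \<inter> hd cs)" "c \<inter> hd cs \<subseteq> S"
      moreover have "finite S" using finite_subset[OF S fin] .
      ultimately have "card (c \<inter> hd cs) \<le> card S" using card_mono by blast
      then show False using cS \<open>k + 1 \<le> card (c \<inter> hd cs)\<close> by linarith
    qed
    then obtain z where z: "z \<in> c \<inter> hd cs" "z \<notin> S" by blast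
    have 1: "(\<lambda>a b. a \<in> \<Union>Q - S \<and> b \<in> \<Union>Q - S \<and> union_edges Q a b)\<^sup>*\<^sup>* x z"
      using same_clique[of c Q x S z] cQ z Cons.prems by simp
    have 2: "(\<lambda>a b. a \<in> \<Union>Q - S \<and> b \<in> \<Union>Q - S \<and> union_edges Q a b)\<^sup>*\<^sup>* z y"
    proof (rule Cons.IH)
      show "\<forall>i. Suc i < length cs \<longrightarrow> k + 1 \<le> card (cs ! i \<inter> cs ! Suc i)"
      proof (intro allI impI)
        fix i assume "Suc i < length cs"
        then show "k + 1 \<le> card (cs ! i \<inter> cs ! Suc i)"
          using Cons.prems(3)[rule_format, of "Suc i"] by simp
      qed
    qed (use False Cons.prems z in auto)
    show ?thesis using 1 2 by simp
  qed
qed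

theorem theorem2:
  fixes k :: nat and Q :: "'a set set"
  assumes fin: "finite (union_vertices Q)"
    and ne: "Q \<noteq> {}"
    and chain: "\<forall>C\<in>Q. \<forall>C'\<in>Q. \<exists>cs. cs \<noteq> [] \<and> hd cs = C \<and> last cs = C' \<and> set cs \<subseteq> Q \<and>
                   (\<forall>i. Suc i < length cs \<longrightarrow> card (cs ! i \<inter> cs ! Suc i) \<ge> k + 1)"
  shows "k_robust k (union_vertices Q) (union_edges Q)"
  unfolding k_robust_def
proof (intro disjI2 allI impI)
  fix S assume S: "S \<subseteq> union_vertices Q" and cS: "card S \<le> k"
  show "connected_graph (union_vertices Q - S) (union_edges Q)"
    unfolding connected_graph_def
  proof (intro ballI)
    fix x y assume x: "x \<in> union_vertices Q - S" and y: "y \<in> union_vertices Q - S"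
    then obtain C C' where C: "C \<in> Q" "x \<in> C" and C': "C' \<in> Q" "y \<in> C'"
      by (auto simp: union_vertices_def)
    then obtain cs where cs: "cs \<noteq> []" "hd cs = C" "last cs = C'" "set cs \<subseteq> Q"
      "\<forall>i. Suc i < length cs \<longrightarrow> card (cs ! i \<inter> cs ! Suc i) \<ge> k + 1"
      using chain by meson
    show "(\<lambda>a b. a \<in> union_vertices Q - S \<and> b \<in> union_vertices Q - S \<and> union_edges Q a b)\<^sup>*\<^sup>* x y"
      unfolding union_vertices_def
    proof (rule path_lemma[of Q S k cs x y])
      show "finite (\<Union>Q)" using fin by (simp add: union_vertices_def)
      show "S \<subseteq> \<Union>Q" using S by (simp add: union_vertices_def)
      show "x \<in> hd cs - S" using cs x C by simp
      show "y \<in> last cs - S" using cs y C' by simp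
    qed (use cS cs in auto)
  qed
qed

end
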